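(* Fix $P_{\max}>0$. For thresholds $(Q,P_{\rm avg})$ let (P2)$_{Q,P_{\rm avg}}$ denote problem (P2). Let $(Q_x,\bar P_x)$, $(Q_y,\bar P_y)$ be threshold pairs and suppose $(P^*_x,\rho^*_x)$ and $(P^*_y,\rho^*_y)$ are optimal policy pairs for (P2)$_{Q_x,\bar P_x}$ and (P2)$_{Q_y,\bar P_y}$. Then for every $\theta\in[0,1]$ there is a policy pair $(P_z,\rho_z)$ with $0\le P_{z,\nu}\le P_{\max}$, $0\le\rho_{z,\nu}\le1$, such that $\mathbb{E}[Q^{\rm NL}_\nu(P_{z,\nu},\rho_{z,\nu})]\ge\theta Q_x+(1-\theta)Q_y$, $\mathbb{E}[P_{z,\nu}]\le\theta\bar P_x+(1-\theta)\bar P_y$, and $\mathbb{E}[R_\nu(P_{z,\nu},\rho_{z,\nu})]\ge\theta\,\mathbb{E}[R_\nu(P^*_{x,\nu},\rho^*_{x,\nu})]+(1-\theta)\,\mathbb{E}[R_\nu(P^*_{y,\nu},\rho^*_{y,\nu})]$. (That is, (P2) satisfies the time-sharing condition.)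
   Context: Standing model: constants $a,b,P_s,T,\sigma^2>0$ are fixed and $\Omega=1/(1+e^{ab})$. Fading is modeled on a probability space carrying independent random variables $h$ (channel power gain, values in $(0,\infty)$, $\mathbb{E}[h]<\infty$) and $U$ (uniform on $[0,1]$). A fading state is $\nu=(h_\nu,U_\nu)$, distributed as $(h,U)$; $\mathbb{E}$ is expectation over the fading state. A policy is a Borel measurable function of the fading state. For a fading state with gain $h_\nu$, transmit power $p\ge0$ and power-splitting ratio $\rho\in[0,1]$: $R_\nu(p,\rho)=\ln\big(1+(1-\rho)h_\nu p/\sigma^2\big)$ (rate, in nats); $\Psi_\nu(p,\rho)=1/(1+e^{-a(\rho h_\nu p-b)})$; $Q^{\rm NL}_\nu(p,\rho)=P_sT(\Psi_\nu(p,\rho)-\Omega)/(1-\Omega)$ (harvested energy). Problem (P2) (short-term power limit $P_{\max}$, average power limit $P_{\rm avg}$, energy threshold $Q$): maximize $\mathbb{E}[R_\nu(P_\nu,\rho_\nu)]$ over pairs of policies $(P_\nu,\rho_\nu)$ with $0\le P_\nu\le P_{\max}$, $0\le\rho_\nu\le1$, subject to $\mathbb{E}[Q^{\rm NL}_\nu(P_\nu,\rho_\nu)]\ge Q$ and $\mathbb{E}[P_\nu]\le P_{\rm avg}$. *)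

theory Defs
  imports "HOL-Probability.Probability"
begin

text \<open>Fading state nu = (h, U). The law of the fading state is the product of the
law H of the channel gain h and the uniform law on [0,1] (h and U independent).\<close>

definition fading :: "real measure \<Rightarrow> (real \<times> real) measure" where
  "fading H = H \<Otimes>\<^sub>M uniform_measure lborel {0..1::real}"

definition Omega :: "real \<Rightarrow> real \<Rightarrow> real" where
  "Omega a b = 1 / (1 + exp (a * b))"

definition rate :: "real \<Rightarrow> real \<times> real \<Rightarrow> real \<Rightarrow> real \<Rightarrow> real" where
  "rate sigma2 nu p rho = ln (1 + (1 - rho) * fst nu * p / sigma2)"

definition Psi :: "real \<Rightarrow> real \<Rightarrow> real \<times> real \<Rightarrow> real \<Rightarrow> real \<Rightarrow> real" where
  "Psi a b nu p rho = 1 / (1 + exp (- a * (rho * fst nu * p - b)))"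

definition QNL :: "real \<Rightarrow> real \<Rightarrow> real \<Rightarrow> real \<Rightarrow> real \<times> real \<Rightarrow> real \<Rightarrow> real \<Rightarrow> real" where
  "QNL a b Ps T nu p rho = Ps * T * (Psi a b nu p rho - Omega a b) / (1 - Omega a b)"

definition admissible ::
  "real measure \<Rightarrow> real \<Rightarrow> (real \<times> real \<Rightarrow> real) \<Rightarrow> (real \<times> real \<Rightarrow> real) \<Rightarrow> bool" where
  "admissible H Pmax P rho \<longleftrightarrow>
     P \<in> borel_measurable (fading H) \<and> rho \<in> borel_measurable (fading H) \<and>
     (\<forall>nu. 0 \<le> P nu \<and> P nu \<le> Pmax) \<and> (\<forall>nu. 0 \<le> rho nu \<and> rho nu \<le> 1)"

definition avg_rate where
  "avg_rate sigma2 H P rho = (\<integral>nu. rate sigma2 nu (P nu) (rho nu) \<partial>fading H)"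

definition avg_energy where
  "avg_energy a b Ps T H P rho = (\<integral>nu. QNL a b Ps T nu (P nu) (rho nu) \<partial>fading H)"

definition avg_power where
  "avg_power H P = (\<integral>nu. P nu \<partial>fading H)"

definition feasibleP2 where
  "feasibleP2 a b Ps T H Pmax Q Pavg P rho \<longleftrightarrow>
     admissible H Pmax P rho \<and> avg_energy a b Ps T H P rho \<ge> Q \<and> avg_power H P \<le> Pavg"

definition optimalP2 where
  "optimalP2 a b Ps T sigma2 H Pmax Q Pavg P rho \<longleftrightarrow>
     feasibleP2 a b Ps T H Pmax Q Pavg P rho \<and>
     (\<forall>P' rho'. feasibleP2 a b Ps T H Pmax Q Pavg P' rho' \<longrightarrow>
        avg_rate sigma2 H P' rho' \<le> avg_rate sigma2 H P rho)"

end

theory Submission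
  imports Defs
begin

lemma ennreal_div1: "(x::ennreal) / 1 = x"
  using mult_divide_eq_ennreal[of 1 x] by simp

lemma mix1d:
  fixes G1 G2 :: "real \<Rightarrow> ennreal" and th :: real
  assumes th: "0 < th" "th < 1"
    and [measurable]: "G1 \<in> borel_measurable borel" "G2 \<in> borel_measurable borel"
  shows "(\<integral>\<^sup>+u. (if u < th then G1 (u/th) else G2 ((u-th)/(1-th))) \<partial>uniform_measure lborel {0..1}) =
    ennreal th * (\<integral>\<^sup>+u. G1 u \<partial>uniform_measure lborel {0..1}) +
    ennreal (1-th) * (\<integral>\<^sup>+u. G2 u \<partial>uniform_measure lborel {0..1})"
proof -
  have m: "(\<lambda>u::real. if u < th then G1 (u/th) else G2 ((u-th)/(1-th))) \<in> borel_measurable borel"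
    by measurable
  have e1: "(\<integral>\<^sup>+u. G1 (u/th) * indicator {0..<th} u \<partial>lborel) = ennreal th * (\<integral>\<^sup>+u. G1 u * indicator {0..1} u \<partial>lborel)"
  proof -
    have "(\<integral>\<^sup>+u. G1 (u/th) * indicator {0..<th} u \<partial>lborel) = ennreal \<bar>th\<bar> * (\<integral>\<^sup>+x. G1 ((0 + th*x)/th) * indicator {0..<th} (0 + th*x) \<partial>lborel)"
      by (rule nn_integral_real_affine) (use th in auto)
    also have "(\<integral>\<^sup>+x. G1 ((0 + th*x)/th) * indicator {0..<th} (0 + th*x) \<partial>lborel) = (\<integral>\<^sup>+x. G1 x * indicator {0..1} x \<partial>lborel)"
    proof (rule nn_integral_cong_AE)
      show "AE x in lborel. G1 ((0 + th*x)/th) * indicator {0..<th} (0 + th*x) = G1 x * indicator {0..1} x"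
        using AE_lborel_singleton[of "1::real"]
      proof (rule eventually_mono)
        fix x :: real assume "x \<noteq> 1"
        moreover have "(0 \<le> th*x \<and> th*x < th) \<longleftrightarrow> (0 \<le> x \<and> x < 1)" using th
          by (simp add: zero_le_mult_iff)
        ultimately show "G1 ((0 + th*x)/th) * indicator {0..<th} (0 + th*x) = G1 x * indicator {0..1} x"
          using th by (auto simp: indicator_def)
      qed
    qed
    finally show ?thesis using th by simp
  qed
  have e2: "(\<integral>\<^sup>+u. G2 ((u-th)/(1-th)) * indicator {th..1} u \<partial>lborel) = ennreal (1-th) * (\<integral>\<^sup>+u. G2 u * indicator {0..1} u \<partial>lborel)"
  proof -
    have "(\<integral>\<^sup>+u. G2 ((u-th)/(1-th)) * indicator {th..1} u \<partial>lborel) = ennreal \<bar>1-th\<bar> * (\<integral>\<^sup>+x. G2 ((th + (1-th)*x - th)/(1-th)) * indicator {th..1} (th + (1-th)*x) \<partial>lborel)"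
      by (rule nn_integral_real_affine) (use th in auto)
    also have "(\<integral>\<^sup>+x. G2 ((th + (1-th)*x - th)/(1-th)) * indicator {th..1} (th + (1-th)*x) \<partial>lborel) = (\<integral>\<^sup>+x. G2 x * indicator {0..1} x \<partial>lborel)"
    proof (rule nn_integral_cong)
      fix x :: real
      have "(th \<le> th + (1-th)*x \<and> th + (1-th)*x \<le> 1) \<longleftrightarrow> (0 \<le> x \<and> x \<le> 1)" using th
      proof -
        have a: "0 \<le> (1-th)*x \<longleftrightarrow> 0 \<le> x" using th by (simp add: zero_le_mult_iff)
        have b: "(1-th)*x \<le> (1-th)*1 \<longleftrightarrow> x \<le> 1" using th by (simp only: mult_le_cancel_left) simp
        show ?thesis using a b by auto
      qed
      then show "G2 ((th + (1-th)*x - th)/(1-th)) * indicator {th..1} (th + (1-th)*x) = G2 x * indicator {0..1} x"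
        using th by (auto simp: indicator_def)
    qed
    finally show ?thesis using th by simp
  qed
  have "(\<integral>\<^sup>+u. (if u < th then G1 (u/th) else G2 ((u-th)/(1-th))) \<partial>uniform_measure lborel {0..1})
      = (\<integral>\<^sup>+u. (if u < th then G1 (u/th) else G2 ((u-th)/(1-th))) * indicator {0..1} u \<partial>lborel)"
    by (subst nn_integral_uniform_measure) (use m in \<open>auto simp: ennreal_div1\<close>)
  also have "\<dots> = (\<integral>\<^sup>+u. G1 (u/th) * indicator {0..<th} u + G2 ((u-th)/(1-th)) * indicator {th..1} u \<partial>lborel)"
    by (rule nn_integral_cong) (use th in \<open>auto simp: indicator_def\<close>)
  also have "\<dots> = (\<integral>\<^sup>+u. G1 (u/th) * indicator {0..<th} u \<partial>lborel) + (\<integral>\<^sup>+u. G2 ((u-th)/(1-th)) * indicator {th..1} u \<partial>lborel)"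
    by (rule nn_integral_add) auto
  also have "\<dots> = ennreal th * (\<integral>\<^sup>+u. G1 u \<partial>uniform_measure lborel {0..1}) +
    ennreal (1-th) * (\<integral>\<^sup>+u. G2 u \<partial>uniform_measure lborel {0..1})"
    unfolding e1 e2 by (simp add: nn_integral_uniform_measure ennreal_div1)
  finally show ?thesis .
qed

lemma sfad: "sets H = sets borel \<Longrightarrow> sets (fading H) = sets (borel \<Otimes>\<^sub>M (borel::real measure))"
  unfolding fading_def by (rule sets_pair_measure_cong) auto

lemma probU: "prob_space (uniform_measure lborel {0..1::real})"
  by (rule prob_space_uniform_measure) auto

lemma mix_nn:
  fixes F1 F2 :: "real \<times> real \<Rightarrow> ennreal" and th :: real
  assumes th: "0 < th" "th < 1" and H: "prob_space H" "sets H = sets borel"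
    and [measurable]: "F1 \<in> borel_measurable (borel \<Otimes>\<^sub>M borel)" "F2 \<in> borel_measurable (borel \<Otimes>\<^sub>M borel)"
  shows "(\<integral>\<^sup>+nu. (if snd nu < th then F1 (fst nu, snd nu/th) else F2 (fst nu, (snd nu-th)/(1-th))) \<partial>fading H) =
    ennreal th * (\<integral>\<^sup>+nu. F1 nu \<partial>fading H) + ennreal (1-th) * (\<integral>\<^sup>+nu. F2 nu \<partial>fading H)"
proof -
  interpret U: prob_space "uniform_measure lborel {0..1::real}" by (rule probU)
  have mF: "\<And>f. f \<in> borel_measurable (borel \<Otimes>\<^sub>M borel) \<Longrightarrow> f \<in> borel_measurable (H \<Otimes>\<^sub>M uniform_measure lborel {0..1::real})"
    using sfad[OF H(2)] unfolding fading_def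
    by (subst measurable_cong_sets[where M'="borel \<Otimes>\<^sub>M borel" and N'=borel]) auto
  let ?g = "\<lambda>nu. (if snd nu < th then F1 (fst nu, snd nu/th) else F2 (fst nu, (snd nu-th)/(1-th)))"
  have mg: "?g \<in> borel_measurable (borel \<Otimes>\<^sub>M borel)" by measurable
  have "(\<integral>\<^sup>+nu. ?g nu \<partial>fading H) = (\<integral>\<^sup>+h. \<integral>\<^sup>+u. ?g (h,u) \<partial>uniform_measure lborel {0..1} \<partial>H)"
    unfolding fading_def by (rule U.nn_integral_fst[symmetric]) (rule mF[OF mg])
  also have "\<dots> = (\<integral>\<^sup>+h. ennreal th * (\<integral>\<^sup>+u. F1 (h,u) \<partial>uniform_measure lborel {0..1}) +
      ennreal (1-th) * (\<integral>\<^sup>+u. F2 (h,u) \<partial>uniform_measure lborel {0..1}) \<partial>H)"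
  proof (rule nn_integral_cong)
    fix h :: real
    have m1: "(\<lambda>u. F1 (h,u)) \<in> borel_measurable borel" by measurable
    have m2: "(\<lambda>u. F2 (h,u)) \<in> borel_measurable borel" by measurable
    show "(\<integral>\<^sup>+u. ?g (h,u) \<partial>uniform_measure lborel {0..1}) = ennreal th * (\<integral>\<^sup>+u. F1 (h,u) \<partial>uniform_measure lborel {0..1}) +
      ennreal (1-th) * (\<integral>\<^sup>+u. F2 (h,u) \<partial>uniform_measure lborel {0..1})"
      using mix1d[OF th m1 m2] by (simp only: fst_conv snd_conv)
  qed
  also have "\<dots> = ennreal th * (\<integral>\<^sup>+h. (\<integral>\<^sup>+u. F1 (h,u) \<partial>uniform_measure lborel {0..1}) \<partial>H) +
      ennreal (1-th) * (\<integral>\<^sup>+h. (\<integral>\<^sup>+u. F2 (h,u) \<partial>uniform_measure lborel {0..1}) \<partial>H)"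
    using U.borel_measurable_nn_integral_fst[OF mF[of F1]] U.borel_measurable_nn_integral_fst[OF mF[of F2]]
    by (simp add: nn_integral_add nn_integral_cmult)
  also have "\<dots> = ennreal th * (\<integral>\<^sup>+nu. F1 nu \<partial>fading H) + ennreal (1-th) * (\<integral>\<^sup>+nu. F2 nu \<partial>fading H)"
    unfolding fading_def using U.nn_integral_fst[OF mF[of F1]] U.nn_integral_fst[OF mF[of F2]] by simp
  finally show ?thesis .
qed

lemma enn2real_mix:
  assumes "a \<noteq> top" "b \<noteq> top" "0 \<le> t" "t \<le> 1"
  shows "enn2real (ennreal t * a + ennreal (1-t) * b) = t * enn2real a + (1-t) * enn2real b"
  using assms by (simp add: enn2real_plus enn2real_mult ennreal_mult_less_top top.not_eq_extremum)

lemma mfad: "sets H = sets borel \<Longrightarrow> f \<in> borel_measurable (fading H) \<longleftrightarrow> f \<in> borel_measurable (borel \<Otimes>\<^sub>M (borel::real measure))"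
  using measurable_cong_sets[OF sfad refl] by blast

lemma mix_real:
  fixes F1 F2 :: "real \<times> real \<Rightarrow> real" and th :: real
  assumes th: "0 < th" "th < 1" and H: "prob_space H" "sets H = sets borel"
    and i1: "integrable (fading H) F1" and i2: "integrable (fading H) F2"
  shows "integrable (fading H) (\<lambda>nu. if snd nu < th then F1 (fst nu, snd nu/th) else F2 (fst nu, (snd nu-th)/(1-th)))"
    and "(\<integral>nu. (if snd nu < th then F1 (fst nu, snd nu/th) else F2 (fst nu, (snd nu-th)/(1-th))) \<partial>fading H) =
      th * (\<integral>nu. F1 nu \<partial>fading H) + (1-th) * (\<integral>nu. F2 nu \<partial>fading H)"
proof -
  let ?g = "\<lambda>nu. if snd nu < th then F1 (fst nu, snd nu/th) else F2 (fst nu, (snd nu-th)/(1-th))"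
  have [measurable]: "F1 \<in> borel_measurable (borel \<Otimes>\<^sub>M borel)" "F2 \<in> borel_measurable (borel \<Otimes>\<^sub>M borel)"
    using i1 i2 mfad[OF H(2)] by auto
  have mg0: "?g \<in> borel_measurable (borel \<Otimes>\<^sub>M borel)" by measurable
  have mg: "?g \<in> borel_measurable (fading H)" by (simp add: mfad[OF H(2)] mg0)
  have gen: "(\<integral>\<^sup>+nu. \<phi> (?g nu) \<partial>fading H) = ennreal th * (\<integral>\<^sup>+nu. \<phi> (F1 nu) \<partial>fading H) + ennreal (1-th) * (\<integral>\<^sup>+nu. \<phi> (F2 nu) \<partial>fading H)"
    if [measurable]: "\<phi> \<in> borel_measurable borel" for \<phi> :: "real \<Rightarrow> ennreal"
  proof -
    have "(\<integral>\<^sup>+nu. \<phi> (?g nu) \<partial>fading H) = (\<integral>\<^sup>+nu. (if snd nu < th then (\<phi> o F1) (fst nu, snd nu/th) else (\<phi> o F2) (fst nu, (snd nu-th)/(1-th))) \<partial>fading H)"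
      by (rule nn_integral_cong) simp
    also have "\<dots> = ennreal th * (\<integral>\<^sup>+nu. (\<phi> o F1) nu \<partial>fading H) + ennreal (1-th) * (\<integral>\<^sup>+nu. (\<phi> o F2) nu \<partial>fading H)"
      by (rule mix_nn[OF th H]) measurable
    finally show ?thesis by simp
  qed
  have fin1: "(\<integral>\<^sup>+nu. ennreal (norm (F1 nu)) \<partial>fading H) < \<infinity>" using i1 unfolding integrable_iff_bounded by auto
  have fin2: "(\<integral>\<^sup>+nu. ennreal (norm (F2 nu)) \<partial>fading H) < \<infinity>" using i2 unfolding integrable_iff_bounded by auto
  show ig: "integrable (fading H) ?g"
  proof (rule integrableI_bounded[OF mg])
    have "(\<integral>\<^sup>+nu. ennreal (norm (?g nu)) \<partial>fading H) = ennreal th * (\<integral>\<^sup>+nu. ennreal (norm (F1 nu)) \<partial>fading H) + ennreal (1-th) * (\<integral>\<^sup>+nu. ennreal (norm (F2 nu)) \<partial>fading H)"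
      using gen[of "\<lambda>x. ennreal (norm x)"] by simp
    also have "\<dots> < \<infinity>" using fin1 fin2 by (simp add: ennreal_mult_less_top)
    finally show "(\<integral>\<^sup>+nu. ennreal (norm (?g nu)) \<partial>fading H) < \<infinity>" .
  qed
  have p: "(\<integral>\<^sup>+nu. ennreal (?g nu) \<partial>fading H) = ennreal th * (\<integral>\<^sup>+nu. ennreal (F1 nu) \<partial>fading H) + ennreal (1-th) * (\<integral>\<^sup>+nu. ennreal (F2 nu) \<partial>fading H)"
    using gen[of "\<lambda>x. ennreal x"] by simp
  have n: "(\<integral>\<^sup>+nu. ennreal (- ?g nu) \<partial>fading H) = ennreal th * (\<integral>\<^sup>+nu. ennreal (- F1 nu) \<partial>fading H) + ennreal (1-th) * (\<integral>\<^sup>+nu. ennreal (- F2 nu) \<partial>fading H)"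
    using gen[of "\<lambda>x. ennreal (- x)"] by simp
  show "(\<integral>nu. ?g nu \<partial>fading H) = th * (\<integral>nu. F1 nu \<partial>fading H) + (1-th) * (\<integral>nu. F2 nu \<partial>fading H)"
    unfolding real_lebesgue_integral_def[OF ig] real_lebesgue_integral_def[OF i1] real_lebesgue_integral_def[OF i2] p n
    using integrableD(2,3)[OF i1] integrableD(2,3)[OF i2] th
    by (simp add: enn2real_mix algebra_simps)
qed

lemma Omega_bounds: "0 < Omega a b" "Omega a b < 1"
  unfolding Omega_def by (auto simp: add_pos_pos)

lemma Psi_bounds: "0 < Psi a b nu p rho" "Psi a b nu p rho < 1"
  unfolding Psi_def by (auto simp: add_pos_pos)

lemma integ_all:
  assumes H: "prob_space H" "sets H = sets borel"
    and pos: "AE x in H. 0 < x" and iH: "integrable H (\<lambda>x. x)" and s2: "sigma2 > 0"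
    and adm: "admissible H Pmax P rho"
  shows "integrable (fading H) P"
    and "integrable (fading H) (\<lambda>nu. QNL a b Ps T nu (P nu) (rho nu))"
    and "integrable (fading H) (\<lambda>nu. rate sigma2 nu (P nu) (rho nu))"
proof -
  interpret U: prob_space "uniform_measure lborel {0..1::real}" by (rule probU)
  interpret F: prob_space "fading H" unfolding fading_def by (rule prob_space_pair[OF H(1) probU])
  have [measurable]: "P \<in> borel_measurable (borel \<Otimes>\<^sub>M borel)" "rho \<in> borel_measurable (borel \<Otimes>\<^sub>M borel)"
    using adm mfad[OF H(2)] unfolding admissible_def by auto
  have bP: "\<And>nu. 0 \<le> P nu \<and> P nu \<le> Pmax" and br: "\<And>nu. 0 \<le> rho nu \<and> rho nu \<le> 1"
    using adm unfolding admissible_def by auto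
  show "integrable (fading H) P"
  proof (rule F.integrable_const_bound[where B=Pmax])
    show "AE x in fading H. norm (P x) \<le> Pmax" using bP by auto
    show "P \<in> borel_measurable (fading H)" using adm unfolding admissible_def by auto
  qed
  show "integrable (fading H) (\<lambda>nu. QNL a b Ps T nu (P nu) (rho nu))"
  proof (rule F.integrable_const_bound[where B="\<bar>Ps * T\<bar> / (1 - Omega a b)"])
    show "(\<lambda>nu. QNL a b Ps T nu (P nu) (rho nu)) \<in> borel_measurable (fading H)"
      unfolding mfad[OF H(2)] QNL_def Psi_def by measurable
    show "AE x in fading H. norm (QNL a b Ps T x (P x) (rho x)) \<le> \<bar>Ps * T\<bar> / (1 - Omega a b)"
    proof (rule AE_I2)
      fix x
      have o1: "0 < 1 - Omega a b" using Omega_bounds[of a b] by simp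
      have d: "\<bar>Psi a b x (P x) (rho x) - Omega a b\<bar> \<le> 1"
        using Omega_bounds[of a b] Psi_bounds[of a b x "P x" "rho x"] by auto
      have "norm (QNL a b Ps T x (P x) (rho x)) = \<bar>Ps * T\<bar> * \<bar>Psi a b x (P x) (rho x) - Omega a b\<bar> / (1 - Omega a b)"
        unfolding QNL_def using o1 by (simp add: abs_mult)
      also have "\<dots> \<le> \<bar>Ps * T\<bar> * 1 / (1 - Omega a b)"
        by (intro divide_right_mono mult_left_mono d) (use o1 in auto)
      finally show "norm (QNL a b Ps T x (P x) (rho x)) \<le> \<bar>Ps * T\<bar> / (1 - Omega a b)" by simp
    qed
  qed
  have mfst: "(\<lambda>nu::real\<times>real. fst nu) \<in> borel_measurable (fading H)" unfolding mfad[OF H(2)] by measurable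
  have ifst: "integrable (fading H) (\<lambda>nu. fst nu)"
  proof (rule integrableI_bounded[OF mfst])
    have mn: "(\<lambda>nu::real\<times>real. ennreal (norm (fst nu))) \<in> borel_measurable (H \<Otimes>\<^sub>M uniform_measure lborel {0..1})"
      using mfst unfolding fading_def by measurable
    have e1: "emeasure (uniform_measure lborel {0..1::real}) UNIV = 1" using U.emeasure_space_1 by simp
    have "(\<integral>\<^sup>+nu. ennreal (norm (fst nu)) \<partial>fading H) = (\<integral>\<^sup>+h. \<integral>\<^sup>+u. ennreal (norm (fst (h,u::real))) \<partial>uniform_measure lborel {0..1::real} \<partial>H)"
      unfolding fading_def by (rule U.nn_integral_fst[OF mn, symmetric])
    also have "\<dots> = (\<integral>\<^sup>+h. ennreal (norm h) \<partial>H)"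
      by (simp add: e1)
    also have "\<dots> < \<infinity>" using iH unfolding integrable_iff_bounded by auto
    finally show "(\<integral>\<^sup>+nu. ennreal (norm (fst nu)) \<partial>fading H) < \<infinity>" .
  qed
  have aepos: "AE nu in fading H. 0 < fst nu"
  proof -
    interpret HU: pair_sigma_finite H "uniform_measure lborel {0..1::real}"
      by (intro pair_sigma_finite.intro subprob_space_imp_sigma_finite prob_space_imp_subprob_space H(1) probU)
    have "AE nu in H \<Otimes>\<^sub>M uniform_measure lborel {0..1::real}. 0 < fst nu"
    proof (rule HU.AE_pair_measure)
      have "(\<lambda>nu::real\<times>real. fst nu) \<in> borel_measurable (H \<Otimes>\<^sub>M uniform_measure lborel {0..1::real})"
        using mfst unfolding fading_def .
      then have "(\<lambda>nu::real\<times>real. fst nu) -` {0<..} \<inter> space (H \<Otimes>\<^sub>M uniform_measure lborel {0..1::real}) \<in> sets (H \<Otimes>\<^sub>M uniform_measure lborel {0..1::real})"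
        by (rule measurable_sets) simp
      moreover have "{x \<in> space (H \<Otimes>\<^sub>M uniform_measure lborel {0..1::real}). 0 < fst x} = (\<lambda>nu::real\<times>real. fst nu) -` {0<..} \<inter> space (H \<Otimes>\<^sub>M uniform_measure lborel {0..1::real})"
        by auto
      ultimately show "{x \<in> space (H \<Otimes>\<^sub>M uniform_measure lborel {0..1::real}). 0 < fst x} \<in> sets (H \<Otimes>\<^sub>M uniform_measure lborel {0..1::real})"
        by (simp only:)
      show "AE x in H. AE y in uniform_measure lborel {0..1::real}. 0 < fst (x, y)"
        using pos by (rule eventually_mono) simp
    qed
    then show ?thesis unfolding fading_def .
  qed
  show "integrable (fading H) (\<lambda>nu. rate sigma2 nu (P nu) (rho nu))"
  proof (rule Bochner_Integration.integrable_bound[where f="\<lambda>nu. fst nu * Pmax / sigma2"])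
    show "integrable (fading H) (\<lambda>nu. fst nu * Pmax / sigma2)"
      using ifst by (intro integrable_divide integrable_mult_left)
    show "(\<lambda>nu. rate sigma2 nu (P nu) (rho nu)) \<in> borel_measurable (fading H)"
      unfolding mfad[OF H(2)] rate_def by measurable
    show "AE nu in fading H. norm (rate sigma2 nu (P nu) (rho nu)) \<le> norm (fst nu * Pmax / sigma2)"
      using aepos
    proof (rule eventually_mono)
      fix nu :: "real \<times> real" assume h: "0 < fst nu"
      have r: "0 \<le> 1 - rho nu" "1 - rho nu \<le> 1" using br[of nu] by auto
      have p: "0 \<le> P nu" "P nu \<le> Pmax" using bP[of nu] by auto
      have y0: "0 \<le> (1 - rho nu) * fst nu * P nu / sigma2" using r p h s2 by simp
      have "(1 - rho nu) * P nu \<le> 1 * P nu" by (rule mult_right_mono) (use r p in auto)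
      also have "\<dots> \<le> Pmax" using p by simp
      finally have "fst nu * ((1 - rho nu) * P nu) \<le> fst nu * Pmax" by (rule mult_left_mono) (use h in auto)
      then have y1: "(1 - rho nu) * fst nu * P nu / sigma2 \<le> fst nu * Pmax / sigma2"
        using s2 by (intro divide_right_mono) (auto simp: algebra_simps)
      have l0: "0 \<le> rate sigma2 nu (P nu) (rho nu)" unfolding rate_def using y0 by simp
      have l1: "rate sigma2 nu (P nu) (rho nu) \<le> (1 - rho nu) * fst nu * P nu / sigma2"
        unfolding rate_def by (rule ln_add_one_self_le_self[OF y0])
      have nn: "0 \<le> fst nu * Pmax / sigma2" using y0 y1 by linarith
      have e1: "norm (fst nu * Pmax / sigma2) = fst nu * Pmax / sigma2"
        unfolding real_norm_def by (rule abs_of_nonneg[OF nn])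
      have e2: "norm (rate sigma2 nu (P nu) (rho nu)) = rate sigma2 nu (P nu) (rho nu)"
        unfolding real_norm_def by (rule abs_of_nonneg[OF l0])
      show "norm (rate sigma2 nu (P nu) (rho nu)) \<le> norm (fst nu * Pmax / sigma2)"
        unfolding e1 e2 using l1 y1 by linarith
    qed
  qed
qed

theorem lemma4:
  fixes a b Ps T sigma2 Pmax :: real and H :: "real measure"
    and Qx Px Qy Py theta :: real
    and Psx rhosx Psy rhosy :: "real \<times> real \<Rightarrow> real"
  assumes "a > 0" "b > 0" "Ps > 0" "T > 0" "sigma2 > 0" "Pmax > 0"
    and "prob_space H" "sets H = sets borel"
    and "AE x in H. 0 < x" "integrable H (\<lambda>x. x)"
    and "optimalP2 a b Ps T sigma2 H Pmax Qx Px Psx rhosx"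
    and "optimalP2 a b Ps T sigma2 H Pmax Qy Py Psy rhosy"
    and "0 \<le> theta" "theta \<le> 1"
  shows "\<exists>Pz rhoz. admissible H Pmax Pz rhoz \<and>
     avg_energy a b Ps T H Pz rhoz \<ge> theta * Qx + (1 - theta) * Qy \<and>
     avg_power H Pz \<le> theta * Px + (1 - theta) * Py \<and>
     avg_rate sigma2 H Pz rhoz \<ge>
       theta * avg_rate sigma2 H Psx rhosx + (1 - theta) * avg_rate sigma2 H Psy rhosy"
proof -
  have fx: "admissible H Pmax Psx rhosx" "avg_energy a b Ps T H Psx rhosx \<ge> Qx" "avg_power H Psx \<le> Px"
    using assms(11) unfolding optimalP2_def feasibleP2_def by auto
  have fy: "admissible H Pmax Psy rhosy" "avg_energy a b Ps T H Psy rhosy \<ge> Qy" "avg_power H Psy \<le> Py"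
    using assms(12) unfolding optimalP2_def feasibleP2_def by auto
  consider "theta = 0" | "theta = 1" | "0 < theta \<and> theta < 1" using assms(13,14) by linarith
  then show ?thesis
  proof cases
    case 1
    then show ?thesis using fy by (intro exI[of _ Psy] exI[of _ rhosy]) auto
  next
    case 2
    then show ?thesis using fx by (intro exI[of _ Psx] exI[of _ rhosx]) auto
  next
    case 3
    then have th: "0 < theta" "theta < 1" by auto
    note H = assms(7,8)
    define Pz where "Pz = (\<lambda>nu. if snd nu < theta then Psx (fst nu, snd nu/theta) else Psy (fst nu, (snd nu-theta)/(1-theta)))"
    define rz where "rz = (\<lambda>nu. if snd nu < theta then rhosx (fst nu, snd nu/theta) else rhosy (fst nu, (snd nu-theta)/(1-theta)))"
    have [measurable]: "Psx \<in> borel_measurable (borel \<Otimes>\<^sub>M borel)" "rhosx \<in> borel_measurable (borel \<Otimes>\<^sub>M borel)"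
      "Psy \<in> borel_measurable (borel \<Otimes>\<^sub>M borel)" "rhosy \<in> borel_measurable (borel \<Otimes>\<^sub>M borel)"
      using fx(1) fy(1) mfad[OF H(2)] unfolding admissible_def by auto
    have adm: "admissible H Pmax Pz rz"
      unfolding admissible_def mfad[OF H(2)]
    proof (intro conjI allI)
      show "Pz \<in> borel_measurable (borel \<Otimes>\<^sub>M borel)" unfolding Pz_def by measurable
      show "rz \<in> borel_measurable (borel \<Otimes>\<^sub>M borel)" unfolding rz_def by measurable
      fix nu
      show "0 \<le> Pz nu" "Pz nu \<le> Pmax" "0 \<le> rz nu" "rz nu \<le> 1"
        using fx(1) fy(1) unfolding admissible_def Pz_def rz_def by auto
    qed
    note ix = integ_all[OF H assms(9,10,5) fx(1)]
    note iy = integ_all[OF H assms(9,10,5) fy(1)]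
    have pw: "avg_power H Pz = theta * avg_power H Psx + (1-theta) * avg_power H Psy"
      unfolding avg_power_def Pz_def by (rule mix_real(2)[OF th H ix(1) iy(1)])
    have en: "avg_energy a b Ps T H Pz rz = theta * avg_energy a b Ps T H Psx rhosx + (1-theta) * avg_energy a b Ps T H Psy rhosy"
    proof -
      have "avg_energy a b Ps T H Pz rz = (\<integral>nu. (if snd nu < theta then (\<lambda>nu. QNL a b Ps T nu (Psx nu) (rhosx nu)) (fst nu, snd nu/theta) else (\<lambda>nu. QNL a b Ps T nu (Psy nu) (rhosy nu)) (fst nu, (snd nu-theta)/(1-theta))) \<partial>fading H)"
        unfolding avg_energy_def by (rule Bochner_Integration.integral_cong) (auto simp: Pz_def rz_def QNL_def Psi_def)
      also have "\<dots> = theta * avg_energy a b Ps T H Psx rhosx + (1-theta) * avg_energy a b Ps T H Psy rhosy"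
        unfolding avg_energy_def by (rule mix_real(2)[OF th H ix(2) iy(2)])
      finally show ?thesis .
    qed
    have rt: "avg_rate sigma2 H Pz rz = theta * avg_rate sigma2 H Psx rhosx + (1-theta) * avg_rate sigma2 H Psy rhosy"
    proof -
      have "avg_rate sigma2 H Pz rz = (\<integral>nu. (if snd nu < theta then (\<lambda>nu. rate sigma2 nu (Psx nu) (rhosx nu)) (fst nu, snd nu/theta) else (\<lambda>nu. rate sigma2 nu (Psy nu) (rhosy nu)) (fst nu, (snd nu-theta)/(1-theta))) \<partial>fading H)"
        unfolding avg_rate_def by (rule Bochner_Integration.integral_cong) (auto simp: Pz_def rz_def rate_def)
      also have "\<dots> = theta * avg_rate sigma2 H Psx rhosx + (1-theta) * avg_rate sigma2 H Psy rhosy"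
        unfolding avg_rate_def by (rule mix_real(2)[OF th H ix(3) iy(3)])
      finally show ?thesis .
    qed
    have "theta * Qx + (1 - theta) * Qy \<le> avg_energy a b Ps T H Pz rz"
      unfolding en using th fx(2) fy(2) by (intro add_mono mult_left_mono) auto
    moreover have "avg_power H Pz \<le> theta * Px + (1 - theta) * Py"
      unfolding pw using th fx(3) fy(3) by (intro add_mono mult_left_mono) auto
    ultimately show ?thesis using adm rt by (intro exI[of _ Pz] exI[of _ rz]) auto
  qed
qed

end
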